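(* Let $E,J,R,Q\in\mathbb{R}^{n\times n}$ with $J=-J^T$, $R=R^T\ge0$ and $Q^TE=E^TQ\ge0$. Then the pencil $sE-(J-R)Q$ is regular if and only if $\ker E\cap\ker(Q^TJQ)\cap\ker(Q^TRQ)=\{0\}$. Furthermore, if this holds and additionally $\ker Q\subseteq\ker E$, then $[E,(J-R)Q]$ is stable.
   Context: A pencil $sE-A$ is regular if $\det(sE-A)$ is not the zero polynomial. For $E,A\in\mathbb{R}^{n\times n}$, $[E,A]$ is stable if every $x\in C^\infty(\mathbb{R},\mathbb{R}^n)$ with $\tfrac{d}{dt}Ex=Ax$ is bounded on $[0,\infty)$. *)

theory Defs
  imports "HOL-Analysis.Analysis" "HOL-Computational_Algebra.Polynomial"
begin

definition pencil :: "real^'n^'n \<Rightarrow> real^'n^'n \<Rightarrow> real poly^'n^'n" where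
  "pencil E A = (\<chi> i j. [:- (A $ i $ j), E $ i $ j:])"

definition regular_pencil :: "real^'n^'n \<Rightarrow> real^'n^'n \<Rightarrow> bool" where
  "regular_pencil E A \<longleftrightarrow> det (pencil E A) \<noteq> 0"

definition smooth_fun :: "(real \<Rightarrow> real^'n) \<Rightarrow> bool" where
  "smooth_fun x \<longleftrightarrow> (\<exists>f :: nat \<Rightarrow> real \<Rightarrow> real^'n. f 0 = x \<and>
     (\<forall>k t. (f k has_vector_derivative f (Suc k) t) (at t)))"

definition stable_pair :: "real^'n^'n \<Rightarrow> real^'n^'n \<Rightarrow> bool" where
  "stable_pair E A \<longleftrightarrow> (\<forall>x. smooth_fun x \<and>
     (\<forall>t. ((\<lambda>s. E *v x s) has_vector_derivative (A *v x t)) (at t))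
     \<longrightarrow> bounded (x ` {0..}))"

definition ker :: "real^'n^'n \<Rightarrow> (real^'n) set" where
  "ker M = {v. M *v v = 0}"

definition psd :: "real^'n^'n \<Rightarrow> bool" where
  "psd M \<longleftrightarrow> (\<forall>v. 0 \<le> v \<bullet> (M *v v))"

end

theory Submission
  imports Defs
begin


lemma dot_transpose: "(x::real^'n) \<bullet> (M *v y) = (transpose M *v x) \<bullet> y"
  by (simp add: dot_lmul_matrix)

lemma psd_zero:
  fixes M :: "real^'n^'n"
  assumes sym: "transpose M = M" and p: "psd M" and z: "x \<bullet> (M *v x) = 0"
  shows "M *v x = 0"
proof -
  define y where "y = M *v x"
  define a where "a = y \<bullet> y"
  define b where "b = y \<bullet> (M *v y)"
  have b0: "b \<ge> 0" using p unfolding psd_def b_def by auto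
  have xy: "x \<bullet> (M *v y) = a"
    using dot_transpose[of x M y] sym by (simp add: a_def y_def)
  have yx: "y \<bullet> (M *v x) = a" by (simp add: a_def y_def)
  have key: "0 \<le> 2*t*a + t^2*b" for t
  proof -
    have "0 \<le> (x + t *\<^sub>R y) \<bullet> (M *v (x + t *\<^sub>R y))" using p unfolding psd_def by auto
    also have "\<dots> = x \<bullet> (M *v x) + t * (x \<bullet> (M *v y)) + t * (y \<bullet> (M *v x)) + t^2 * (y \<bullet> (M *v y))"
      by (simp add: matrix_vector_right_distrib matrix_vector_mult_scaleR inner_add_left inner_add_right algebra_simps power2_eq_square)
    finally show ?thesis using z xy yx b_def by (simp add: algebra_simps)
  qed
  have "a = 0"
  proof (rule ccontr)
    assume "a \<noteq> 0"
    then have apos: "a > 0" unfolding a_def by simp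
    define t where "t = -a/(b+1)"
    have ne: "b + 1 > 0" using b0 by linarith
    have t1: "t * (b+1) = -a" unfolding t_def using ne by simp
    have tneg: "t < 0" unfolding t_def using ne apos by (simp add: divide_neg_pos)
    have "t^2*b \<le> t^2*(b+1)" by (simp add: mult_left_mono)
    also have "\<dots> = t * (t*(b+1))" by (simp add: power2_eq_square)
    also have "\<dots> = -t*a" using t1 by simp
    finally have "2*t*a + t^2*b \<le> t * a" by linarith
    also have "t * a < 0" using tneg apos by (simp add: mult_neg_pos)
    finally have "2*t*a + t^2*b < 0" .
    with key[of t] show False by simp
  qed
  then show ?thesis unfolding a_def y_def by simp
qed

lemma det_zero_iff: "det (M::real^'n^'n) = 0 \<longleftrightarrow> (\<exists>x. x \<noteq> 0 \<and> M *v x = 0)"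
  by (metis invertible_det_nz invertible_left_inverse matrix_left_invertible_ker)



lemma poly_det_pencil: "poly (det (pencil E A)) t = det (t *\<^sub>R E - A)"
  unfolding det_def by (simp add: pencil_def poly_sum poly_prod algebra_simps)

lemma coercive:
  fixes K :: "(real^'n) set" and f :: "real^'n \<Rightarrow> real"
  assumes K: "subspace K" and cf: "continuous_on UNIV f"
    and hom: "\<And>c w. f (c *\<^sub>R w) = c^2 * f w"
    and pos: "\<And>w. w \<in> K \<Longrightarrow> w \<noteq> 0 \<Longrightarrow> f w > 0"
  shows "\<exists>c>0. \<forall>w\<in>K. c * (norm w)^2 \<le> f w"
proof (cases "K \<subseteq> {0}")
  case True
  have "f 0 = 0" using hom[of 0 0] by simp
  then show ?thesis using True by (intro exI[of _ 1]) auto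
next
  case False
  then obtain w0 where w0: "w0 \<in> K" "w0 \<noteq> 0" by auto
  let ?S = "sphere 0 1 \<inter> K"
  have cS: "compact ?S" using closed_subspace[OF K] by (intro compact_Int_closed) auto
  have "(1 / norm w0) *\<^sub>R w0 \<in> ?S" using w0 K by (auto simp: subspace_scale)
  then have neS: "?S \<noteq> {}" by blast
  obtain m where m: "m \<in> ?S" and mmin: "\<And>y. y \<in> ?S \<Longrightarrow> f m \<le> f y"
    using continuous_attains_inf[OF cS neS continuous_on_subset[OF cf]] by blast
  have "m \<noteq> 0" using m by auto
  then have mpos: "f m > 0" using m pos[of m] by auto
  show ?thesis
  proof (intro exI[of _ "f m"] conjI ballI mpos)
    fix w assume w: "w \<in> K"
    show "f m * (norm w)^2 \<le> f w"
    proof (cases "w = 0")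
      case True
      then show ?thesis using hom[of 0 0] by simp
    next
      case False
      let ?u = "(1 / norm w) *\<^sub>R w"
      have uS: "?u \<in> ?S" using w False K by (auto simp: subspace_scale)
      have "w = norm w *\<^sub>R ?u" using False by simp
      then have "f w = (norm w)^2 * f ?u" using hom by metis
      moreover have "f m \<le> f ?u" using mmin uS by blast
      ultimately show ?thesis by (metis mult.commute mult_left_mono zero_le_power2)
    qed
  qed
qed



lemma neg_mv: "(- M) *v (a::real^'n) = - (M *v a)"
  by (simp add: vec_eq_iff matrix_vector_mult_def sum_negf)

lemma scaleR_mv: "(t *\<^sub>R M) *v (a::real^'n) = t *\<^sub>R (M *v a)"
  by (simp add: vec_eq_iff matrix_vector_mult_def sum_distrib_left mult.assoc)

lemma diff_mv: "(M - N) *v (a::real^'n) = M *v a - N *v a"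
  by (simp add: matrix_vector_mult_diff_rdistrib)

lemma transpose_diff: "transpose (M - N :: real^'n^'n) = transpose M - transpose N"
  by (simp add: vec_eq_iff transpose_def)

lemma transpose_scaleR': "transpose (t *\<^sub>R M :: real^'n^'n) = t *\<^sub>R transpose M"
  by (rule transpose_scalar)

lemma sym_dot: "transpose M = M \<Longrightarrow> (a::real^'n) \<bullet> (M *v b) = b \<bullet> (M *v a)"
  by (metis dot_transpose inner_commute)

lemma skew_dot: "transpose M = - M \<Longrightarrow> (a::real^'n) \<bullet> (M *v b) = - (b \<bullet> (M *v a))"
  by (metis dot_transpose inner_commute neg_mv inner_minus_left)

lemma dotQ: "(Q *v a) \<bullet> (b::real^'n) = a \<bullet> (transpose Q *v b)"
  using dot_transpose[of a "transpose Q" b] by simp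



declare transpose_matrix_vector[simp del]

theorem corollary9:
  fixes E J R Q :: "real^'n^'n"
  assumes "J = - transpose J"
    and "R = transpose R" and "psd R"
    and "transpose Q ** E = transpose E ** Q" and "psd (transpose Q ** E)"
  shows "(regular_pencil E ((J - R) ** Q) \<longleftrightarrow>
            ker E \<inter> ker (transpose Q ** J ** Q) \<inter> ker (transpose Q ** R ** Q) = {0})
         \<and> (ker E \<inter> ker (transpose Q ** J ** Q) \<inter> ker (transpose Q ** R ** Q) = {0}
              \<and> ker Q \<subseteq> ker E \<longrightarrow> stable_pair E ((J - R) ** Q))"
proof -
  let ?A = "(J - R) ** Q"
  let ?M = "transpose Q ** E"
  let ?I = "ker E \<inter> ker (transpose Q ** J ** Q) \<inter> ker (transpose Q ** R ** Q)"
  note mva = matrix_vector_mul_assoc[symmetric]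
  have Msym: "transpose ?M = ?M" using assms(4) by (simp add: matrix_transpose_mul)
  have Rsym: "transpose R = R" using assms(2) by simp
  have Jskew: "transpose J = - J" using assms(1) by (metis minus_minus)
  have Av: "?A *v v = J *v (Q *v v) - R *v (Q *v v)" for v
    by (simp add: mva diff_mv)
  have skew0: "y \<bullet> (J *v y) = 0" for y
    using skew_dot[OF Jskew, of y y] by simp
  have Rge: "0 \<le> y \<bullet> (R *v y)" for y using assms(3) unfolding psd_def by auto
  have Mge: "0 \<le> y \<bullet> (?M *v y)" for y using assms(5) unfolding psd_def by auto
  have quad: "v \<bullet> (transpose Q *v (?A *v v)) = - ((Q *v v) \<bullet> (R *v (Q *v v)))" for v
    by (simp add: dotQ[symmetric] Av inner_diff_right skew0)
  have I0: "0 \<in> ?I" by (simp add: ker_def)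
  have p1a: "?I = {0}" if reg: "regular_pencil E ?A"
  proof (rule ccontr)
    assume "?I \<noteq> {0}"
    then obtain v where vI: "v \<in> ?I" and v0: "v \<noteq> 0" using I0 by blast
    have Ev: "E *v v = 0" and Jv: "transpose Q *v (J *v (Q *v v)) = 0"
      and Rv: "transpose Q *v (R *v (Q *v v)) = 0"
      using vI by (auto simp: ker_def mva)
    have "\<forall>t. poly (det (pencil E ?A)) t = 0"
    proof
      fix t
      show "poly (det (pencil E ?A)) t = 0"
        unfolding poly_det_pencil
      proof (cases "Q *v v = 0")
        case True
        have "(t *\<^sub>R E - ?A) *v v = 0" by (simp add: diff_mv scaleR_mv Av Ev True)
        then show "det (t *\<^sub>R E - ?A) = 0" using det_zero_iff v0 by blast
      next
        case False
        let ?P = "t *\<^sub>R E - ?A"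
        have orth: "(Q *v v) \<bullet> (?P *v y) = 0" for y
        proof -
          have e1: "(Q *v v) \<bullet> (E *v y) = 0"
          proof -
            have "(Q *v v) \<bullet> (E *v y) = v \<bullet> (?M *v y)" by (simp add: dotQ mva)
            also have "\<dots> = y \<bullet> (?M *v v)" by (rule sym_dot[OF Msym])
            also have "\<dots> = 0" by (simp add: mva Ev)
            finally show ?thesis .
          qed
          have e2: "(Q *v v) \<bullet> (J *v (Q *v y)) = 0"
            using skew_dot[OF Jskew, of "Q *v v" "Q *v y"] Jv by (simp add: dotQ)
          have e3: "(Q *v v) \<bullet> (R *v (Q *v y)) = 0"
            using sym_dot[OF Rsym, of "Q *v v" "Q *v y"] Rv by (simp add: dotQ)
          show ?thesis using e1 e2 e3
            by (simp add: diff_mv scaleR_mv Av inner_diff_right)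
        qed
        let ?z = "transpose ?P *v (Q *v v)"
        have "?z \<bullet> ?z = 0"
          using orth[of ?z] dot_transpose[of "Q *v v" ?P ?z] by simp
        then have "?z = 0" by simp
        then have "det (transpose ?P) = 0" using det_zero_iff False by blast
        then show "det ?P = 0" by simp
      qed
    qed
    then have "det (pencil E ?A) = 0" using poly_all_0_iff_0 by blast
    then show False using reg unfolding regular_pencil_def by simp
  qed
  have p1b: "regular_pencil E ?A" if I: "?I = {0}"
  proof (rule ccontr)
    assume nreg: "\<not> regular_pencil E ?A"
    have dt: "det (t *\<^sub>R E - ?A) = 0" for t
      using nreg unfolding regular_pencil_def poly_det_pencil[symmetric] by simp
    define N where "N = {v. ?M *v v = 0 \<and> R *v (Q *v v) = 0 \<and> (transpose Q ** J ** Q) *v v = 0}"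
    have subN: "subspace N"
      unfolding subspace_def N_def by (simp add: matrix_vector_right_distrib matrix_vector_mult_scaleR)
    have Npos: "(E *v w) \<bullet> (E *v w) > 0" if "w \<in> N" "w \<noteq> 0" for w
    proof -
      have "E *v w \<noteq> 0"
      proof
        assume "E *v w = 0"
        then have "w \<in> ?I" using \<open>w \<in> N\<close> by (auto simp: N_def ker_def mva)
        then show False using I \<open>w \<noteq> 0\<close> by blast
      qed
      then show ?thesis by simp
    qed
    have cont: "continuous_on UNIV (\<lambda>w. (E *v w) \<bullet> (E *v w))"
      by (intro continuous_intros linear_continuous_on matrix_vector_mul_bounded_linear)
    obtain c where c0: "c > 0" and cN: "\<And>w. w \<in> N \<Longrightarrow> c * (norm w)^2 \<le> (E *v w) \<bullet> (E *v w)"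
      using coercive[OF subN cont _ Npos] by (force simp: matrix_vector_mult_scaleR power2_eq_square)
    obtain B where B0: "B > 0" and BB: "\<And>x. norm ((J ** Q) *v x) \<le> norm x * B"
      using bounded_linear.pos_bounded[OF matrix_vector_mul_bounded_linear[of "J ** Q"]] by blast
    define t where "t = sqrt ((B^2 + 1) / c)"
    have b2: "B^2 + 1 > 0" using zero_le_power2[of B] by linarith
    have pc: "(B^2 + 1) / c > 0" using c0 b2 by (rule divide_pos_pos[rotated])
    have t0: "t > 0" unfolding t_def using pc by simp
    have t2: "t^2 * c = B^2 + 1" unfolding t_def using c0 pc by simp
    obtain v where v0: "v \<noteq> 0" and vk: "(t *\<^sub>R E - ?A) *v v = 0" using dt[of t] det_zero_iff by blast
    have tE: "t *\<^sub>R (E *v v) = ?A *v v" using vk by (simp add: diff_mv scaleR_mv)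
    have "v \<bullet> (transpose Q *v (?A *v v)) = v \<bullet> (transpose Q *v (t *\<^sub>R (E *v v)))"
      by (simp only: tE)
    also have "\<dots> = t * (v \<bullet> (?M *v v))" by (simp add: mva matrix_vector_mult_scaleR)
    finally have "t * (v \<bullet> (?M *v v)) = v \<bullet> (transpose Q *v (?A *v v))" by simp
    then have eq: "t * (v \<bullet> (?M *v v)) + (Q *v v) \<bullet> (R *v (Q *v v)) = 0" using quad by simp
    have tq: "t * (v \<bullet> (?M *v v)) \<ge> 0" using Mge[of v] t0 by simp
    have r0: "(Q *v v) \<bullet> (R *v (Q *v v)) = 0" using eq tq Rge[of "Q *v v"] by linarith
    have "t * (v \<bullet> (?M *v v)) = 0" using eq tq Rge[of "Q *v v"] by linarith
    then have q0: "v \<bullet> (?M *v v) = 0" using t0 by simp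
    have Mv: "?M *v v = 0" by (rule psd_zero[OF Msym assms(5) q0])
    have RQv: "R *v (Q *v v) = 0" by (rule psd_zero[OF Rsym assms(3) r0])
    have AJ: "?A *v v = J *v (Q *v v)" by (simp add: Av RQv)
    have AJ2: "(J - R) *v (Q *v v) = J *v (Q *v v)" by (simp add: diff_mv RQv)
    have JQv: "(transpose Q ** J ** Q) *v v = 0"
    proof -
      have "(transpose Q ** J ** Q) *v v = transpose Q *v (?A *v v)" by (simp add: mva AJ2)
      also have "\<dots> = transpose Q *v (t *\<^sub>R (E *v v))" by (simp only: tE)
      also have "\<dots> = t *\<^sub>R (?M *v v)" by (simp add: mva matrix_vector_mult_scaleR)
      finally show ?thesis by (simp add: Mv)
    qed
    have vN: "v \<in> N" unfolding N_def using Mv RQv JQv by simp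
    have "t * norm (E *v v) = norm (t *\<^sub>R (E *v v))" using t0 by simp
    also have "\<dots> = norm ((J ** Q) *v v)" using tE AJ by (simp add: mva)
    finally have "(t * norm (E *v v))^2 = (norm ((J ** Q) *v v))^2" by simp
    also have "\<dots> \<le> (norm v * B)^2" using BB[of v] by (simp add: power_mono)
    finally have "t^2 * (norm (E *v v))^2 \<le> B^2 * (norm v)^2" by (simp add: power_mult_distrib mult.commute)
    moreover have "t^2 * (c * (norm v)^2) \<le> t^2 * (norm (E *v v))^2"
      using cN[OF vN] by (simp add: power2_norm_eq_inner mult_left_mono)
    moreover have "(B^2 + 1) * (norm v)^2 = t^2 * (c * (norm v)^2)"
      using t2 by (metis mult.assoc)
    ultimately have "(B^2 + 1) * (norm v)^2 \<le> B^2 * (norm v)^2" by linarith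
    then have "(norm v)^2 \<le> 0" by (simp add: algebra_simps)
    then show False using v0 by simp
  qed
  have p2: "stable_pair E ?A" if I: "?I = {0}" and kQ: "ker Q \<subseteq> ker E"
  proof -
    have Qinj: "w = 0" if "Q *v w = 0" for w
    proof -
      have "w \<in> ?I" using that kQ by (auto simp: ker_def mva)
      then show ?thesis using I by blast
    qed
    have "det Q \<noteq> 0" using Qinj det_zero_iff by blast
    then have "det (transpose Q) \<noteq> 0" by simp
    then have QTinj: "w = 0" if "transpose Q *v w = 0" for w using that det_zero_iff by blast
    define K where "K = {w. \<exists>w1 w2. E *v w1 = ?A *v w \<and> E *v w2 = ?A *v w1}"
    have subK: "subspace K"
      unfolding subspace_def
    proof (intro conjI ballI allI)
      show "0 \<in> K" unfolding K_def by (intro CollectI exI[of _ 0]) simp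
    next
      fix x y assume "x \<in> K" "y \<in> K"
      then obtain x1 x2 y1 y2 where "E *v x1 = ?A *v x" "E *v x2 = ?A *v x1"
        "E *v y1 = ?A *v y" "E *v y2 = ?A *v y1" unfolding K_def by auto
      then show "x + y \<in> K" unfolding K_def
        by (intro CollectI exI[of _ "x1 + y1"] exI[of _ "x2 + y2"]) (simp add: matrix_vector_right_distrib)
    next
      fix a :: real and x assume "x \<in> K"
      then obtain x1 x2 where "E *v x1 = ?A *v x" "E *v x2 = ?A *v x1" unfolding K_def by auto
      then show "a *\<^sub>R x \<in> K" unfolding K_def
        by (intro CollectI exI[of _ "a *\<^sub>R x1"] exI[of _ "a *\<^sub>R x2"]) (simp add: matrix_vector_mult_scaleR)
    qed
    have Kpos: "w \<bullet> (?M *v w) > 0" if wK: "w \<in> K" and w0: "w \<noteq> 0" for w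
    proof (rule ccontr)
      assume "\<not> w \<bullet> (?M *v w) > 0"
      then have q0: "w \<bullet> (?M *v w) = 0" using Mge[of w] by simp
      obtain w1 w2 where e1: "E *v w1 = ?A *v w" and e2: "E *v w2 = ?A *v w1"
        using wK unfolding K_def by auto
      have Mw: "?M *v w = 0" by (rule psd_zero[OF Msym assms(5) q0])
      have "w \<bullet> (?M *v w1) = w1 \<bullet> (?M *v w)" by (rule sym_dot[OF Msym])
      also have "\<dots> = 0" by (simp add: Mw)
      finally have "w \<bullet> (transpose Q *v (?A *v w)) = 0" by (simp add: mva e1)
      then have r0: "(Q *v w) \<bullet> (R *v (Q *v w)) = 0" using quad[of w] by simp
      have RQw: "R *v (Q *v w) = 0" by (rule psd_zero[OF Rsym assms(3) r0])
      have AJ: "?A *v w = J *v (Q *v w)" by (simp add: Av RQw)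
      have AJ2: "(J - R) *v (Q *v w) = J *v (Q *v w)" by (simp add: diff_mv RQw)
      have "w1 \<bullet> (?M *v w1) = (Q *v w1) \<bullet> (J *v (Q *v w))"
        by (simp add: mva e1 AJ2 dotQ)
      also have "\<dots> = - ((Q *v w) \<bullet> (J *v (Q *v w1)))" by (rule skew_dot[OF Jskew])
      also have "J *v (Q *v w1) = E *v w2 + R *v (Q *v w1)" by (simp add: e2 Av)
      also have "(Q *v w) \<bullet> (E *v w2 + R *v (Q *v w1)) = w \<bullet> (?M *v w2)"
      proof -
        have "(Q *v w) \<bullet> (R *v (Q *v w1)) = (Q *v w1) \<bullet> (R *v (Q *v w))" by (rule sym_dot[OF Rsym])
        also have "\<dots> = 0" by (simp add: RQw)
        finally have z: "(Q *v w) \<bullet> (R *v (Q *v w1)) = 0" .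
        have "(Q *v w) \<bullet> (E *v w2) = w \<bullet> (?M *v w2)" by (simp add: dotQ mva)
        then show ?thesis using z by (simp add: inner_add_right)
      qed
      also have "w \<bullet> (?M *v w2) = w2 \<bullet> (?M *v w)" by (rule sym_dot[OF Msym])
      finally have q1: "w1 \<bullet> (?M *v w1) = 0" by (simp add: Mw RQw)
      have Mw1: "?M *v w1 = 0" by (rule psd_zero[OF Msym assms(5) q1])
      have "E *v w = 0" using Mw QTinj by (simp add: mva)
      moreover have "transpose Q *v (J *v (Q *v w)) = 0" using Mw1 by (simp add: mva e1 AJ2)
      ultimately have "w \<in> ?I" by (simp add: ker_def mva RQw)
      then show False using I w0 by blast
    qed
    have cont: "continuous_on UNIV (\<lambda>w. w \<bullet> (?M *v w))"
      by (intro continuous_intros linear_continuous_on matrix_vector_mul_bounded_linear)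
    obtain c where c0: "c > 0" and cK: "\<And>w. w \<in> K \<Longrightarrow> c * (norm w)^2 \<le> w \<bullet> (?M *v w)"
      using coercive[OF subK cont _ Kpos] by (force simp: matrix_vector_mult_scaleR power2_eq_square)
    show ?thesis unfolding stable_pair_def
    proof (intro allI impI, elim conjE)
      fix x :: "real \<Rightarrow> real^'n"
      assume sm: "smooth_fun x"
        and de: "\<forall>t. ((\<lambda>s. E *v x s) has_vector_derivative ?A *v x t) (at t)"
      obtain f where f0: "f 0 = x" and fd: "\<And>k t. (f k has_vector_derivative f (Suc k) t) (at t)"
        using sm unfolding smooth_fun_def by blast
      have dlin: "((\<lambda>s. N *v f k s) has_vector_derivative N *v f (Suc k) t) (at t)" for N :: "real^'n^'n" and k t
        by (rule bounded_linear.has_vector_derivative[OF matrix_vector_mul_bounded_linear fd])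
      have e1: "E *v f 1 t = ?A *v f 0 t" for t
        using vector_derivative_unique_at[OF dlin[of E 0 t]] de f0 by simp
      have e2: "E *v f 2 t = ?A *v f 1 t" for t
      proof -
        have "(\<lambda>s. E *v f 1 s) = (\<lambda>s. ?A *v f 0 s)" using e1 by auto
        then have "((\<lambda>s. E *v f 1 s) has_vector_derivative ?A *v f 1 t) (at t)"
          using dlin[of ?A 0 t] by simp
        then show ?thesis using vector_derivative_unique_at dlin[of E 1 t]
          by (metis numeral_2_eq_2 One_nat_def)
      qed
      have inK: "x t \<in> K" for t unfolding K_def using e1[of t] e2[of t] f0 by auto
      define H where "H s = x s \<bullet> (?M *v x s)" for s
      have Hd: "(H has_real_derivative (- 2 * ((Q *v x t) \<bullet> (R *v (Q *v x t))))) (at t)" for t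
      proof -
        have d1: "(x has_vector_derivative f 1 t) (at t)" using fd[of 0 t] f0 by simp
        have d2: "((\<lambda>s. ?M *v x s) has_vector_derivative ?M *v f 1 t) (at t)"
          using dlin[of ?M 0 t] f0 by simp
        have "(H has_vector_derivative (x t \<bullet> (?M *v f 1 t) + f 1 t \<bullet> (?M *v x t))) (at t)"
          unfolding H_def by (rule bounded_bilinear.has_vector_derivative[OF bounded_bilinear_inner d1 d2])
        moreover have "x t \<bullet> (?M *v f 1 t) + f 1 t \<bullet> (?M *v x t) = - 2 * ((Q *v x t) \<bullet> (R *v (Q *v x t)))"
        proof -
          have "f 1 t \<bullet> (?M *v x t) = x t \<bullet> (?M *v f 1 t)" by (rule sym_dot[OF Msym])
          moreover have "x t \<bullet> (?M *v f 1 t) = - ((Q *v x t) \<bullet> (R *v (Q *v x t)))"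
            using quad[of "x t"] e1[of t] f0 by (simp add: mva)
          ultimately show ?thesis by simp
        qed
        ultimately show ?thesis by (simp add: has_real_derivative_iff_has_vector_derivative)
      qed
      have Hdec: "H t \<le> H 0" if "t \<ge> 0" for t
        using DERIV_nonpos_imp_nonincreasing[of 0 t H] that Hd Rge by fastforce
      show "bounded (x ` {0..})"
        unfolding bounded_iff
      proof (intro exI ballI)
        fix y assume "y \<in> x ` {0..}"
        then obtain t where t: "t \<ge> 0" "y = x t" by auto
        have "c * (norm y)^2 \<le> H 0" using cK[OF inK[of t]] Hdec[OF t(1)] t(2) unfolding H_def by simp
        then have "(norm y)^2 \<le> H 0 / c" using c0 by (simp add: field_simps)
        then show "norm y \<le> sqrt (H 0 / c)" by (rule real_le_rsqrt)
      qed
    qed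
  qed
  show ?thesis using p1a p1b p2 by blast
qed

end
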